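(* Let $\mathbf{A}$ be the $6\times 3$ matrix with rows $(1,1,0),(1,1,0),(1,0,1),(1,0,1),(0,1,1),(0,1,1)$, and $\mathbf{B}$ the $6\times 8$ matrix with rows $(1,1,1,0,0,1,0,0)$, $(1,0,0,1,1,1,0,0)$, $(1,1,0,1,0,0,1,0)$, $(1,0,1,0,1,0,1,0)$, $(1,1,0,0,1,0,0,1)$, $(1,0,1,1,0,0,0,1)$. Let $\mathbf{L}$ be the $8\times 15$ matrix whose first six rows form the block $(\mathbf{A}\mid \mathbf{I}_6\mid \mathbf{I}_6)$, whose seventh row is all ones and whose eighth row is all zeros; let $\mathbf{R}$ be the $8\times 15$ matrix whose first six rows form $(\mathbf{B}\mid \mathbf{O}_{6\times 7})$, whose seventh row is all ones and whose eighth row is all zeros. Then $(\mathbf{L},\mathbf{R})$ is centered and $\mathbf{L}\preceq^{\mathrm{PC}}\mathbf{R}$, but $(\mathbf{L},\mathbf{R})$ admits no dominance map.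
   Context: $\mathbf{I}_6$ is the $6\times6$ identity matrix and $\mathbf{O}_{6\times7}$ the zero matrix. $\mathbf{A}_{(i)}$ is the $i$-th row; $e$ the all-ones row vector; $|v|=\sum_k|v_k|$; $\le$ between vectors is componentwise. A pair of $(0,1)$-matrices with the same number of rows, having a common all-zero row, is centered if $|\mathbf{L}_{(i)}|=|\mathbf{R}_{(i)}|$ for all $i$ and some row satisfies $\mathbf{L}_{(i)}=e=\mathbf{R}_{(i)}$. A dominance map is $f:\{0,1\}^{m}\to\{0,1\}^{m}$ ($m$ the common number of columns) with $|u|=|f(u)|$ and $\mathbf{L}u^T\le\mathbf{R}f(u)^T$ for all $u$. $\mathbf{L}\preceq^{\mathrm{PC}}\mathbf{R}$ means $v\mathbf{L}\preceq v\mathbf{R}$ for all $v\in\mathbb{R}_{\ge0}^{8}$, where for $x,y\in\mathbb{R}^d$, $x\preceq y$ means $\sum_{n=1}^k x^\downarrow_n\le\sum_{n=1}^k y^\downarrow_n$ for $k<d$ and equal total sums, $x^\downarrow_n$ being the $n$-th largest component. *)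

theory Defs
  imports Complex_Main
begin

text \<open>Matrices with n rows and m columns are represented as functions
  nat \<Rightarrow> nat \<Rightarrow> real, only entries with i < n, j < m being relevant.
  Row vectors of length d are functions nat \<Rightarrow> real (indices < d relevant),
  or real lists of length d.\<close>

definition zero_one_matrix :: "nat \<Rightarrow> nat \<Rightarrow> (nat \<Rightarrow> nat \<Rightarrow> real) \<Rightarrow> bool" where
  "zero_one_matrix n m M \<longleftrightarrow> (\<forall>i<n. \<forall>j<m. M i j \<in> {0, 1})"

definition row_norm :: "nat \<Rightarrow> (nat \<Rightarrow> nat \<Rightarrow> real) \<Rightarrow> nat \<Rightarrow> real" where
  "row_norm m M i = (\<Sum>j<m. \<bar>M i j\<bar>)"

text \<open>Centered pair (including the standing requirements: (0,1)-matrices with a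
  common all-zero row).\<close>
definition centered :: "nat \<Rightarrow> nat \<Rightarrow> (nat \<Rightarrow> nat \<Rightarrow> real) \<Rightarrow> (nat \<Rightarrow> nat \<Rightarrow> real) \<Rightarrow> bool" where
  "centered n m L R \<longleftrightarrow>
     zero_one_matrix n m L \<and> zero_one_matrix n m R \<and>
     (\<exists>i<n. \<forall>j<m. L i j = 0 \<and> R i j = 0) \<and>
     (\<forall>i<n. row_norm m L i = row_norm m R i) \<and>
     (\<exists>i<n. \<forall>j<m. L i j = 1 \<and> R i j = 1)"

definition binvecs :: "nat \<Rightarrow> (nat \<Rightarrow> real) set" where
  "binvecs m = {u. (\<forall>j<m. u j \<in> {0, 1}) \<and> (\<forall>j\<ge>m. u j = 0)}"

definition vnorm :: "nat \<Rightarrow> (nat \<Rightarrow> real) \<Rightarrow> real" where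
  "vnorm m u = (\<Sum>j<m. \<bar>u j\<bar>)"

definition dominance_map ::
  "nat \<Rightarrow> nat \<Rightarrow> (nat \<Rightarrow> nat \<Rightarrow> real) \<Rightarrow> (nat \<Rightarrow> nat \<Rightarrow> real) \<Rightarrow> ((nat \<Rightarrow> real) \<Rightarrow> (nat \<Rightarrow> real)) \<Rightarrow> bool" where
  "dominance_map n m L R f \<longleftrightarrow>
     (\<forall>u\<in>binvecs m. f u \<in> binvecs m \<and> vnorm m u = vnorm m (f u) \<and>
        (\<forall>i<n. (\<Sum>j<m. L i j * u j) \<le> (\<Sum>j<m. R i j * f u j)))"

definition decr :: "real list \<Rightarrow> real list" where
  "decr x = rev (sort x)"

definition majorized :: "real list \<Rightarrow> real list \<Rightarrow> bool" (infix "\<preceq>\<^sub>m" 50) where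
  "x \<preceq>\<^sub>m y \<longleftrightarrow> length x = length y \<and>
     (\<forall>k < length x. sum_list (take k (decr x)) \<le> sum_list (take k (decr y))) \<and>
     sum_list x = sum_list y"

definition vecmat :: "nat \<Rightarrow> nat \<Rightarrow> (nat \<Rightarrow> real) \<Rightarrow> (nat \<Rightarrow> nat \<Rightarrow> real) \<Rightarrow> real list" where
  "vecmat n m v M = map (\<lambda>j. \<Sum>i<n. v i * M i j) [0..<m]"

definition pc_dom :: "nat \<Rightarrow> nat \<Rightarrow> (nat \<Rightarrow> nat \<Rightarrow> real) \<Rightarrow> (nat \<Rightarrow> nat \<Rightarrow> real) \<Rightarrow> bool" where
  "pc_dom n m L R \<longleftrightarrow> (\<forall>v. (\<forall>i<n. v i \<ge> 0) \<longrightarrow> vecmat n m v L \<preceq>\<^sub>m vecmat n m v R)"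

definition mat_of_rows :: "nat list list \<Rightarrow> nat \<Rightarrow> nat \<Rightarrow> real" where
  "mat_of_rows rs i j = real (rs ! i ! j)"

definition A_rows :: "nat list list" where
  "A_rows = [[1,1,0],[1,1,0],[1,0,1],[1,0,1],[0,1,1],[0,1,1]]"

definition B_rows :: "nat list list" where
  "B_rows = [[1,1,1,0,0,1,0,0],[1,0,0,1,1,1,0,0],[1,1,0,1,0,0,1,0],
             [1,0,1,0,1,0,1,0],[1,1,0,0,1,0,0,1],[1,0,1,1,0,0,0,1]]"

definition unit6 :: "nat \<Rightarrow> nat list" where
  "unit6 i = map (\<lambda>k. if k = i then 1 else 0) [0..<6]"

definition L_rows :: "nat list list" where
  "L_rows = map (\<lambda>i. A_rows ! i @ unit6 i @ unit6 i) [0..<6] @ [replicate 15 1, replicate 15 0]"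

definition R_rows :: "nat list list" where
  "R_rows = map (\<lambda>i. B_rows ! i @ replicate 7 0) [0..<6] @ [replicate 15 1, replicate 15 0]"

definition Lmat :: "nat \<Rightarrow> nat \<Rightarrow> real" where "Lmat = mat_of_rows L_rows"
definition Rmat :: "nat \<Rightarrow> nat \<Rightarrow> real" where "Rmat = mat_of_rows R_rows"

end

theory Submission
  imports Defs
begin

definition phi :: "real \<Rightarrow> real list \<Rightarrow> real" where
  "phi t xs = sum_list (map (\<lambda>x. max (x - t) 0) xs)"

lemma sum_insort: "sum_list (map f (insort x ys)) = f x + sum_list (map (f::real \<Rightarrow> real) ys)"
  by (induction ys) (auto simp: algebra_simps)

lemma sum_sort: "sum_list (map f (sort xs)) = sum_list (map (f::real \<Rightarrow> real) xs)"
  by (induction xs) (auto simp: sum_insort)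

lemma sum_decr: "sum_list (map f (decr xs)) = sum_list (map (f::real \<Rightarrow> real) xs)"
  by (simp add: decr_def rev_map[symmetric] sum_sort)

lemma length_decr: "length (decr xs) = length xs"
  by (simp add: decr_def)

lemma sorted_decr: "sorted_wrt (\<ge>) (decr xs)"
  by (simp add: decr_def sorted_wrt_rev)

lemma phi_decr: "phi t (decr xs) = phi t xs"
  unfolding phi_def by (rule sum_decr)

lemma phi_split: "phi t xs = phi t (take k xs) + phi t (drop k xs)"
  unfolding phi_def by (metis append_take_drop_id map_append sum_list_append)

lemma phi_nonneg: "0 \<le> phi t xs"
  unfolding phi_def by (rule sum_list_nonneg) auto

lemma take_bound:
  fixes ds :: "real list"
  shows "sum_list (take k ds) \<le> real (length (take k ds)) * t + phi t (take k ds)"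
proof -
  have "sum_list (take k ds) = (\<Sum>x\<leftarrow>take k ds. x)" by simp
  also have "\<dots> \<le> (\<Sum>x\<leftarrow>take k ds. t + max (x - t) 0)"
    by (rule sum_list_mono) auto
  also have "\<dots> = real (length (take k ds)) * t + phi t (take k ds)"
    unfolding phi_def sum_list_addf by (simp add: sum_list_triv)
  finally show ?thesis .
qed

lemma top_le:
  assumes "k \<le> length xs"
  shows "sum_list (take k (decr xs)) \<le> real k * t + phi t xs"
proof -
  have l: "length (take k (decr xs)) = k" using assms by (simp add: length_decr)
  have "sum_list (take k (decr xs)) \<le> real k * t + phi t (take k (decr xs))"
    using take_bound[of k "decr xs" t] l by simp
  also have "\<dots> \<le> real k * t + phi t (decr xs)"
    using phi_split[of t "decr xs" k] phi_nonneg[of t "drop k (decr xs)"] by simp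
  finally show ?thesis by (simp add: phi_decr)
qed

lemma top_eq:
  assumes "0 < k" "k \<le> length ys"
  defines "t \<equiv> decr ys ! (k - 1)"
  shows "sum_list (take k (decr ys)) = real k * t + phi t ys"
proof -
  let ?ds = "decr ys"
  have len: "length ?ds = length ys" by (rule length_decr)
  have s: "sorted_wrt (\<ge>) ?ds" by (rule sorted_decr)
  have ge: "x \<ge> t" if "x \<in> set (take k ?ds)" for x
  proof -
    from that obtain i where i: "i < length (take k ?ds)" "x = take k ?ds ! i"
      by (metis in_set_conv_nth)
    then have ik: "i < k" "i < length ?ds" by auto
    then have x: "x = ?ds ! i" using i by simp
    show ?thesis
    proof (cases "i = k - 1")
      case True then show ?thesis using x t_def by simp
    next
      case False
      then have "i < k - 1" using ik by simp
      then have "?ds ! i \<ge> ?ds ! (k - 1)"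
        using sorted_wrt_nth_less[OF s, of i "k - 1"] assms len by simp
      then show ?thesis using x t_def by simp
    qed
  qed
  have le: "x \<le> t" if "x \<in> set (drop k ?ds)" for x
  proof -
    from that obtain i where i: "i < length (drop k ?ds)" "x = drop k ?ds ! i"
      by (metis in_set_conv_nth)
    then have x: "x = ?ds ! (k + i)" "k + i < length ?ds" by auto
    have "?ds ! (k - 1) \<ge> ?ds ! (k + i)"
      using sorted_wrt_nth_less[OF s, of "k - 1" "k + i"] x assms by simp
    then show ?thesis using x t_def by simp
  qed
  have l: "length (take k ?ds) = k" using assms len by simp
  have p1: "phi t (take k ?ds) = sum_list (take k ?ds) - real k * t"
  proof -
    have "phi t (take k ?ds) = (\<Sum>x\<leftarrow>take k ?ds. x - t)"
      unfolding phi_def by (rule arg_cong[where f=sum_list], rule map_cong) (auto dest: ge)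
    also have "\<dots> = sum_list (take k ?ds) - real k * t"
      unfolding sum_list_subtractf using l by (simp add: sum_list_triv)
    finally show ?thesis .
  qed
  have p2: "phi t (drop k ?ds) = 0"
  proof -
    have "phi t (drop k ?ds) = (\<Sum>x\<leftarrow>drop k ?ds. 0)"
      unfolding phi_def by (rule arg_cong[where f=sum_list], rule map_cong) (auto dest: le)
    then show ?thesis by simp
  qed
  have "phi t ys = phi t ?ds" by (simp add: phi_decr)
  also have "\<dots> = phi t (take k ?ds) + phi t (drop k ?ds)" by (rule phi_split)
  finally have "phi t ys = phi t (take k ?ds) + phi t (drop k ?ds)" .
  then show ?thesis using p1 p2 by linarith
qed

lemma maj_by_phi:
  assumes "length xs = length ys" "sum_list xs = sum_list ys"
    "\<And>t. phi t xs \<le> phi t ys"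
  shows "xs \<preceq>\<^sub>m ys"
  unfolding majorized_def
proof (intro conjI allI impI)
  fix k assume k: "k < length xs"
  show "sum_list (take k (decr xs)) \<le> sum_list (take k (decr ys))"
  proof (cases "k = 0")
    case True then show ?thesis by simp
  next
    case False
    define t where "t = decr ys ! (k - 1)"
    have "sum_list (take k (decr xs)) \<le> real k * t + phi t xs"
      using top_le k by simp
    also have "\<dots> \<le> real k * t + phi t ys" using assms(3) by simp
    also have "\<dots> = sum_list (take k (decr ys))"
      using top_eq[of k ys] False k assms(1) t_def by simp
    finally show ?thesis .
  qed
qed (use assms in auto)

lemma grp1:
  fixes A B C s :: real
  assumes "A \<ge> 0" "B \<ge> 0" "C \<ge> 0" "s \<ge> 0" "A+B < s"
  shows "min (A+B+C) s + min A s + min B s + min C s \<le> min (A+B) s + min (A+C) s + min (B+C) s"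
proof -
  have "min A s = A" "min B s = B" "min (A+B) s = A+B" using assms by auto
  moreover have "min (A+B+C) s + min C s \<le> min (A+C) s + min (B+C) s"
    using assms by (auto simp: min_def)
  ultimately show ?thesis by linarith
qed

lemma grp:
  fixes A B C s :: real
  assumes "A \<ge> 0" "B \<ge> 0" "C \<ge> 0" "s \<ge> 0" "A+B < s \<or> A+C < s \<or> B+C < s"
  shows "min (A+B+C) s + min A s + min B s + min C s \<le> min (A+B) s + min (A+C) s + min (B+C) s"
  using assms(5)
proof (elim disjE)
  assume "A+B < s" then show ?thesis using grp1 assms by blast
next
  assume "A+C < s" then show ?thesis using grp1[of A C B s] assms by (simp add: ac_simps)
next
  assume "B+C < s" then show ?thesis using grp1[of B C A s] assms by (simp add: ac_simps)
qed

lemma qbox: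
  fixes a b c d e f s :: real
  assumes "0 \<le> a" "0 \<le> b" "0 \<le> c" "0 \<le> d" "0 \<le> e" "0 \<le> f" "0 \<le> s"
  shows "min (a+c+e) s + min (a+d+f) s + min (b+c+f) s + min (b+d+e) s + min (a+b) s + min (c+d) s + min (e+f) s
     \<le> 2*(a+b+c+d+e+f) + 2*s"
proof -
  define X where "X = min (a+c+e) s + min (a+d+f) s + min (b+c+f) s + min (b+d+e) s"
  define Y where "Y = min (a+b) s + min (c+d) s + min (e+f) s"
  have "X \<le> 2*(a+b+c+d+e+f)" "X \<le> 4*s" unfolding X_def by (simp_all add: min_def)
  moreover have "Y \<le> a+b+c+d+e+f" "Y \<le> 3*s" unfolding Y_def by (simp_all add: min_def)
  moreover define W where "W = a+b+c+d+e+f"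
  ultimately have "X \<le> 2*W" "X \<le> 4*s" "Y \<le> W" "Y \<le> 3*s" by simp_all
  then have "X + Y \<le> 2*W + 2*s" by (cases "W \<le> 2*s") linarith+
  then show ?thesis unfolding X_def Y_def W_def by linarith
qed

lemma mono3:
  fixes u v r s :: real
  assumes "0 \<le> u" "0 \<le> v" "0 \<le> r" "0 \<le> s"
  shows "min (u+v+r) s \<le> min (min u s + min v s + min r s) s"
  using assms by (auto simp: min_def)

lemma mono2:
  fixes u v s :: real
  assumes "0 \<le> u" "0 \<le> v" "0 \<le> s"
  shows "min (u+v) s \<le> min (min u s + min v s) s"
  using assms by (auto simp: min_def)

lemma sub3:
  fixes u v r s :: real
  assumes "0 \<le> u" "0 \<le> v" "0 \<le> r" "0 \<le> s"
  shows "min (u+v+r) s \<le> min u s + min v s + min r s"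
  using assms by (auto simp: min_def)

lemma qgen:
  fixes a b c d e f s :: real
  assumes "0 \<le> a" "0 \<le> b" "0 \<le> c" "0 \<le> d" "0 \<le> e" "0 \<le> f" "0 \<le> s"
  shows "min (a+c+e) s + min (a+d+f) s + min (b+c+f) s + min (b+d+e) s + min (a+b) s + min (c+d) s + min (e+f) s
     \<le> 2*(min a s + min b s + min c s + min d s + min e s + min f s) + 2*s"
proof -
  let ?a = "min a s" let ?b = "min b s" let ?c = "min c s" let ?d = "min d s" let ?e = "min e s" let ?f = "min f s"
  have q: "min (?a+?c+?e) s + min (?a+?d+?f) s + min (?b+?c+?f) s + min (?b+?d+?e) s + min (?a+?b) s + min (?c+?d) s + min (?e+?f) s
     \<le> 2*(?a+?b+?c+?d+?e+?f) + 2*s"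
    by (rule qbox) (use assms in auto)
  have "min (a+c+e) s \<le> min (?a+?c+?e) s" by (rule mono3) (use assms in auto)
  moreover have "min (a+d+f) s \<le> min (?a+?d+?f) s" by (rule mono3) (use assms in auto)
  moreover have "min (b+c+f) s \<le> min (?b+?c+?f) s" by (rule mono3) (use assms in auto)
  moreover have "min (b+d+e) s \<le> min (?b+?d+?e) s" by (rule mono3) (use assms in auto)
  moreover have "min (a+b) s \<le> min (?a+?b) s" by (rule mono2) (use assms in auto)
  moreover have "min (c+d) s \<le> min (?c+?d) s" by (rule mono2) (use assms in auto)
  moreover have "min (e+f) s \<le> min (?e+?f) s" by (rule mono2) (use assms in auto)
  ultimately show ?thesis using q by linarith
qed

lemma lin1:
  fixes x1 x2 x3 x4 y0 g1 g2 g3 p1 p2 p3 a b c d e f :: real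
  shows "x1 \<le> a+c+e \<Longrightarrow> x2 \<le> a+d+f \<Longrightarrow> x3 \<le> b+c+f \<Longrightarrow> x4 \<le> b+d+e \<Longrightarrow>
    y0 + g1 + g2 + g3 \<le> p1 + p2 + p3 \<Longrightarrow>
    y0 + x1 + x2 + x3 + x4 + g1 + g2 + g3 \<le> p1 + p2 + p3 + 2*(a+b+c+d+e+f)"
  by (smt (verit))

lemma lin2:
  fixes x1 x2 x3 x4 y0 g1 g2 g3 p1 p2 p3 w :: real
  shows "x1 + x2 + x3 + x4 + g1 + g2 + g3 \<le> w + 2*s \<Longrightarrow> p1 = s \<Longrightarrow> p2 = s \<Longrightarrow> p3 = s \<Longrightarrow> y0 \<le> s \<Longrightarrow>
    y0 + x1 + x2 + x3 + x4 + g1 + g2 + g3 \<le> p1 + p2 + p3 + w"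
  by linarith

lemma mainq:
  fixes a b c d e f s :: real
  assumes "0 \<le> a" "0 \<le> b" "0 \<le> c" "0 \<le> d" "0 \<le> e" "0 \<le> f" "0 \<le> s"
  shows "min (a+b+c+d+e+f) s + min (a+c+e) s + min (a+d+f) s + min (b+c+f) s + min (b+d+e) s
      + min (a+b) s + min (c+d) s + min (e+f) s
     \<le> min (a+b+c+d) s + min (a+b+e+f) s + min (c+d+e+f) s
      + 2*(min a s + min b s + min c s + min d s + min e s + min f s)"
proof (cases "a+b+c+d < s \<or> a+b+e+f < s \<or> c+d+e+f < s")
  case True
  have h: "a+b+c+d < s \<or> a+b+e+f < s \<or> c+d+e+f < s" using True .
  have g0: "min ((a+b)+(c+d)+(e+f)) s + min (a+b) s + min (c+d) s + min (e+f) s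
      \<le> min ((a+b)+(c+d)) s + min ((a+b)+(e+f)) s + min ((c+d)+(e+f)) s"
    by (rule grp) (use assms h in \<open>simp_all add: add.assoc\<close>)
  have g: "min (a+b+c+d+e+f) s + min (a+b) s + min (c+d) s + min (e+f) s
      \<le> min (a+b+c+d) s + min (a+b+e+f) s + min (c+d+e+f) s"
    using g0 by (simp add: add.assoc)
  have "min (a+c+e) s \<le> min a s + min c s + min e s" by (rule sub3) (use assms in auto)
  moreover have "min (a+d+f) s \<le> min a s + min d s + min f s" by (rule sub3) (use assms in auto)
  moreover have "min (b+c+f) s \<le> min b s + min c s + min f s" by (rule sub3) (use assms in auto)
  moreover have "min (b+d+e) s \<le> min b s + min d s + min e s" by (rule sub3) (use assms in auto)
  ultimately show ?thesis using g by (rule lin1)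
next
  case False
  then have "min (a+b+c+d) s = s" "min (a+b+e+f) s = s" "min (c+d+e+f) s = s" by (simp_all add: min_def)
  moreover have "min (a+b+c+d+e+f) s \<le> s" by simp
  ultimately show ?thesis using qgen[OF assms] by (intro lin2) auto
qed

lemma s8: "(\<Sum>i<(8::nat). f i) = f 0 + f 1 + f 2 + f 3 + f 4 + f 5 + f 6 + (f 7::real)"
  by (simp add: eval_nat_numeral)
lemma s15: "(\<Sum>i<(15::nat). f i) = f 0 + f 1 + f 2 + f 3 + f 4 + f 5 + f 6 + f 7 + f 8 + f 9 + f 10 + f 11 + f 12 + f 13 + (f 14::real)"
  by (simp add: eval_nat_numeral)
lemma u15: "[0..<15] = [0,1,2,3,4,5,6,7,8,9,10,11,12,13,14]"
  by (simp add: upt_rec)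
lemma Lr: "L_rows = [[1,1,0,1,0,0,0,0,0,1,0,0,0,0,0],[1,1,0,0,1,0,0,0,0,0,1,0,0,0,0],
 [1,0,1,0,0,1,0,0,0,0,0,1,0,0,0],[1,0,1,0,0,0,1,0,0,0,0,0,1,0,0],
 [0,1,1,0,0,0,0,1,0,0,0,0,0,1,0],[0,1,1,0,0,0,0,0,1,0,0,0,0,0,1],
 replicate 15 1, replicate 15 0]"
  by (simp add: L_rows_def A_rows_def unit6_def upt_rec)
lemma Rr: "R_rows = [[1,1,1,0,0,1,0,0,0,0,0,0,0,0,0],[1,0,0,1,1,1,0,0,0,0,0,0,0,0,0],[1,1,0,1,0,0,1,0,0,0,0,0,0,0,0],
             [1,0,1,0,1,0,1,0,0,0,0,0,0,0,0],[1,1,0,0,1,0,0,1,0,0,0,0,0,0,0],[1,0,1,1,0,0,0,1,0,0,0,0,0,0,0],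
 replicate 15 1, replicate 15 0]"
  by (simp add: R_rows_def B_rows_def upt_rec eval_nat_numeral)

definition x0 :: "(nat \<Rightarrow> real) \<Rightarrow> real list" where
  "x0 v = [v 0+v 1+v 2+v 3, v 0+v 1+v 4+v 5, v 2+v 3+v 4+v 5, v 0, v 1, v 2, v 3, v 4, v 5,
           v 0, v 1, v 2, v 3, v 4, v 5]"
definition y0 :: "(nat \<Rightarrow> real) \<Rightarrow> real list" where
  "y0 v = [v 0+v 1+v 2+v 3+v 4+v 5, v 0+v 2+v 4, v 0+v 3+v 5, v 1+v 2+v 5, v 1+v 3+v 4,
           v 0+v 1, v 2+v 3, v 4+v 5, 0, 0, 0, 0, 0, 0, 0]"

lemma Lv: "vecmat 8 15 v Lmat = map (\<lambda>z. z + v 6) (x0 v)"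
  unfolding vecmat_def u15 s8 by (simp add: Lmat_def mat_of_rows_def Lr x0_def)
lemma Rv: "vecmat 8 15 v Rmat = map (\<lambda>z. z + v 6) (y0 v)"
  unfolding vecmat_def u15 s8 by (simp add: Rmat_def mat_of_rows_def Rr y0_def)

lemma phi_shift: "phi t (map (\<lambda>z. z + g) zs) = phi (t - g) zs"
  unfolding phi_def by (simp add: o_def algebra_simps)

lemma phi_min: "phi s zs = sum_list zs - sum_list (map (\<lambda>z. min z s) zs)"
proof -
  have "phi s zs = (\<Sum>z\<leftarrow>zs. z - min z s)"
    unfolding phi_def by (rule arg_cong[where f=sum_list], rule map_cong) (auto simp: max_def min_def)
  then show ?thesis by (simp add: sum_list_subtractf)
qed

lemma min_neg: "(\<forall>z\<in>set zs. 0 \<le> z) \<Longrightarrow> s < (0::real) \<Longrightarrow> sum_list (map (\<lambda>z. min z s) zs) = real (length zs) * s"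
  by (induction zs) (auto simp: min_def algebra_simps)

lemma keyq:
  assumes nn: "\<And>i. i < 6 \<Longrightarrow> 0 \<le> v i"
  shows "sum_list (map (\<lambda>z. min z s) (y0 v)) \<le> sum_list (map (\<lambda>z. min z s) (x0 v))"
proof (cases "s < 0")
  case True
  have "\<forall>z\<in>set (x0 v). 0 \<le> z" "\<forall>z\<in>set (y0 v). 0 \<le> z"
    using nn[of 0] nn[of 1] nn[of 2] nn[of 3] nn[of 4] nn[of 5]
    by (auto simp: x0_def y0_def intro!: add_nonneg_nonneg)
  then show ?thesis using True by (simp add: min_neg x0_def y0_def)
next
  case False
  then have s: "0 \<le> s" by simp
  have m0: "min 0 s = 0" using s by simp
  have k: "min (v 0+v 1+v 2+v 3+v 4+v 5) s + min (v 0+v 2+v 4) s + min (v 0+v 3+v 5) s + min (v 1+v 2+v 5) s + min (v 1+v 3+v 4) s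
      + min (v 0+v 1) s + min (v 2+v 3) s + min (v 4+v 5) s
     \<le> min (v 0+v 1+v 2+v 3) s + min (v 0+v 1+v 4+v 5) s + min (v 2+v 3+v 4+v 5) s
      + 2*(min (v 0) s + min (v 1) s + min (v 2) s + min (v 3) s + min (v 4) s + min (v 5) s)"
    by (rule mainq) (use nn s in auto)
  show ?thesis unfolding x0_def y0_def using k by (simp add: m0)
qed

lemma pc: "pc_dom 8 15 Lmat Rmat"
  unfolding pc_dom_def
proof (intro allI impI)
  fix v :: "nat \<Rightarrow> real"
  assume "\<forall>i<8. 0 \<le> v i"
  then have nn: "\<And>i. i < 6 \<Longrightarrow> 0 \<le> v i" by auto
  show "vecmat 8 15 v Lmat \<preceq>\<^sub>m vecmat 8 15 v Rmat"
    unfolding Lv Rv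
  proof (rule maj_by_phi)
    show "length (map (\<lambda>z. z + v 6) (x0 v)) = length (map (\<lambda>z. z + v 6) (y0 v))"
      by (simp add: x0_def y0_def)
    show "sum_list (map (\<lambda>z. z + v 6) (x0 v)) = sum_list (map (\<lambda>z. z + v 6) (y0 v))"
      by (simp add: x0_def y0_def)
    fix t
    have e: "sum_list (x0 v) = sum_list (y0 v)" by (simp add: x0_def y0_def)
    show "phi t (map (\<lambda>z. z + v 6) (x0 v)) \<le> phi t (map (\<lambda>z. z + v 6) (y0 v))"
    proof -
      have kq: "sum_list (map (\<lambda>z. min z (t - v 6)) (y0 v)) \<le> sum_list (map (\<lambda>z. min z (t - v 6)) (x0 v))"
        by (rule keyq) (rule nn)
      have "phi t (map (\<lambda>z. z + v 6) (x0 v)) = phi (t - v 6) (x0 v)" by (rule phi_shift)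
      moreover have "phi t (map (\<lambda>z. z + v 6) (y0 v)) = phi (t - v 6) (y0 v)" by (rule phi_shift)
      ultimately show ?thesis using kq e phi_min[of "t - v 6" "x0 v"] phi_min[of "t - v 6" "y0 v"] by linarith
    qed
  qed
qed

lemma all_upt: "(\<forall>i<n. P i) \<longleftrightarrow> (\<forall>i\<in>set [0..<n]. P i)" by auto
lemma u8: "[0..<8] = [0,1,2,3,4,5,6,7::nat]" by (simp add: upt_rec)

lemma all8: "(\<forall>i<(8::nat). P i) \<longleftrightarrow> P 0 \<and> P 1 \<and> P 2 \<and> P 3 \<and> P 4 \<and> P 5 \<and> P 6 \<and> P 7"
  unfolding all_upt u8 by simp
lemma all15: "(\<forall>i<(15::nat). P i) \<longleftrightarrow> P 0 \<and> P 1 \<and> P 2 \<and> P 3 \<and> P 4 \<and> P 5 \<and> P 6 \<and> P 7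
   \<and> P 8 \<and> P 9 \<and> P 10 \<and> P 11 \<and> P 12 \<and> P 13 \<and> P 14"
  unfolding all_upt u15 by simp

lemma zo_rows:
  assumes "\<forall>r\<in>set rs. length r = m \<and> (\<forall>x\<in>set r. x \<in> {0,1})" "length rs = n"
  shows "zero_one_matrix n m (mat_of_rows rs)"
  unfolding zero_one_matrix_def mat_of_rows_def
proof (intro allI impI)
  fix i j assume "i < n" "j < m"
  then have "rs ! i \<in> set rs" using assms by simp
  then have "rs ! i ! j \<in> set (rs ! i)" "\<forall>x\<in>set (rs ! i). x \<in> {0,1}" using assms \<open>j < m\<close> by auto
  then have "rs ! i ! j \<in> {0,1}" by blast
  then show "real (rs ! i ! j) \<in> {0,1}" by auto
qed

lemma zoL: "zero_one_matrix 8 15 Lmat"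
  unfolding Lmat_def by (rule zo_rows) (simp_all add: Lr)
lemma zoR: "zero_one_matrix 8 15 Rmat"
  unfolding Rmat_def by (rule zo_rows) (simp_all add: Rr)

lemma cent: "centered 8 15 Lmat Rmat"
  unfolding centered_def
proof (intro conjI zoL zoR)
  show "\<exists>i<8. \<forall>j<15. Lmat i j = 0 \<and> Rmat i j = 0"
    by (rule exI[of _ 7]) (simp add: Lmat_def Rmat_def mat_of_rows_def Lr Rr)
  show "\<exists>i<8. \<forall>j<15. Lmat i j = 1 \<and> Rmat i j = 1"
    by (rule exI[of _ 6]) (simp add: Lmat_def Rmat_def mat_of_rows_def Lr Rr)
  show "\<forall>i<8. row_norm 15 Lmat i = row_norm 15 Rmat i"
    unfolding all8 row_norm_def s15 by (simp add: Lmat_def Rmat_def mat_of_rows_def Lr Rr)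
qed

lemma nodom: "\<not> (\<exists>f. dominance_map 8 15 Lmat Rmat f)"
proof
  assume "\<exists>f. dominance_map 8 15 Lmat Rmat f"
  then obtain f where f: "dominance_map 8 15 Lmat Rmat f" by blast
  define u :: "nat \<Rightarrow> real" where "u = (\<lambda>j. if j < 3 then 1 else 0)"
  have ub: "u \<in> binvecs 15" by (simp add: u_def binvecs_def)
  define g where "g = f u"
  have gb: "g \<in> binvecs 15" and nrm: "vnorm 15 u = vnorm 15 g"
    and rows: "\<forall>i<8. (\<Sum>j<15. Lmat i j * u j) \<le> (\<Sum>j<15. Rmat i j * g j)"
    using f ub unfolding dominance_map_def g_def by auto
  have g01: "\<forall>j<15. g j \<in> {0,1}" using gb by (simp add: binvecs_def)
  then have gg: "g 0 \<in> {0,1}" "g 1 \<in> {0,1}" "g 2 \<in> {0,1}" "g 3 \<in> {0,1}" "g 4 \<in> {0,1}"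
     "g 5 \<in> {0,1}" "g 6 \<in> {0,1}" "g 7 \<in> {0,1}" "g 8 \<in> {0,1}" "g 9 \<in> {0,1}"
     "g 10 \<in> {0,1}" "g 11 \<in> {0,1}" "g 12 \<in> {0,1}" "g 13 \<in> {0,1}" "g 14 \<in> {0,1}"
    unfolding all15 by simp_all
  have n: "3 = \<bar>g 0\<bar> + \<bar>g 1\<bar> + \<bar>g 2\<bar> + \<bar>g 3\<bar> + \<bar>g 4\<bar> + \<bar>g 5\<bar> + \<bar>g 6\<bar> + \<bar>g 7\<bar>
     + \<bar>g 8\<bar> + \<bar>g 9\<bar> + \<bar>g 10\<bar> + \<bar>g 11\<bar> + \<bar>g 12\<bar> + \<bar>g 13\<bar> + \<bar>g 14\<bar>"
    using nrm unfolding vnorm_def s15 by (simp add: u_def)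
  have r: "2 \<le> g 0 + g 1 + g 2 + g 5" "2 \<le> g 0 + g 3 + g 4 + g 5" "2 \<le> g 0 + g 1 + g 3 + g 6"
      "2 \<le> g 0 + g 2 + g 4 + g 6" "2 \<le> g 0 + g 1 + g 4 + g 7" "2 \<le> g 0 + g 2 + g 3 + g 7"
    using rows unfolding all8 s15 by (simp_all add: u_def Lmat_def Rmat_def mat_of_rows_def Lr Rr)
  have b: "\<And>j. j < 15 \<Longrightarrow> 0 \<le> g j \<and> g j \<le> 1" using g01 by auto
  have b0: "0 \<le> g 0" "g 0 \<le> 1" "0 \<le> g 5" "0 \<le> g 6" "0 \<le> g 7" "0 \<le> g 8" "0 \<le> g 9"
    "0 \<le> g 10" "0 \<le> g 11" "0 \<le> g 12" "0 \<le> g 13" "0 \<le> g 14"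
    using b[of 0] b[of 5] b[of 6] b[of 7] b[of 8] b[of 9] b[of 10] b[of 11] b[of 12] b[of 13] b[of 14] by simp_all
  have ab: "\<And>j. j < 15 \<Longrightarrow> \<bar>g j\<bar> = g j" using b by auto
  have n': "3 = g 0 + g 1 + g 2 + g 3 + g 4 + g 5 + g 6 + g 7 + g 8 + g 9 + g 10 + g 11 + g 12 + g 13 + g 14"
    using n ab[of 0] ab[of 1] ab[of 2] ab[of 3] ab[of 4] ab[of 5] ab[of 6] ab[of 7] ab[of 8] ab[of 9]
      ab[of 10] ab[of 11] ab[of 12] ab[of 13] ab[of 14] by simp
  have d: "g 1 = 0 \<or> g 1 = 1" "g 2 = 0 \<or> g 2 = 1" "g 3 = 0 \<or> g 3 = 1" "g 4 = 0 \<or> g 4 = 1"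
    using gg by auto
  have K: "0 \<le> g 8 + g 9 + g 10 + g 11 + g 12 + g 13 + g 14" using b0 by linarith
  have P: "0 \<le> g 5" "0 \<le> g 6" "0 \<le> g 7" using b0 by simp_all
  have sr: "12 \<le> 6 * g 0 + 3 * g 1 + 3 * g 2 + 3 * g 3 + 3 * g 4 + 2 * g 5 + 2 * g 6 + 2 * g 7" using r by linarith
  have g0: "g 0 = 1" and g5: "g 5 = 0" "g 6 = 0" "g 7 = 0" and s4: "g 1 + g 2 + g 3 + g 4 = 2"
    using sr n' K P b0(2) by linarith+
  from d show False using r s4 unfolding g0 g5 by (elim disjE) simp_all
qed

theorem mainTheorem9:
  shows "centered 8 15 Lmat Rmat \<and> pc_dom 8 15 Lmat Rmat \<and>
         \<not> (\<exists>f. dominance_map 8 15 Lmat Rmat f)"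
  using cent pc nodom by blast

end
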